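(* Let $w\in\Sigma^n$ and, for each letter $q\in\Sigma$, let $i_q$ be the leftmost position of $w$ with $w[i_q]=q$. Then distinct paths $(v_{p_1},\dots,v_{p_j})$ of the same length $j$ in $\mathrm{NEG}(w)$, each starting at some vertex $v_{i_q}$, correspond to distinct subsequences $w[p_1]\cdots w[p_j]$ of $w$; i.e., every such path corresponds to a unique subsequence of $w$.
   Context: Words are finite sequences over $\Sigma=\{1,\dots,\sigma\}$ with the usual order, $\Sigma$ being the set of letters of $w$. $P_w[i,x]$ denotes the largest $i'\le i$ with $w[i']=x$. The next element graph $\mathrm{NEG}(w)$ is the directed, edge-labelled graph with vertices $v_1,\dots,v_n$ whose edges are pairs $(v_i,v_j)$ with $i<j$ carrying a label: $\uparrow$ if $w[i]<w[j]$ and for all $j'\in[i+1,j-1]$, $w[i]>w[j']$ or $w[j']>w[j]$; $\rightarrow$ if $w[i]=w[j]$ and $i=P_w[j-1,w[j]]$; $\downarrow$ if $w[i]>w[j]$ and for all $j'\in[i+1,j-1]$, $w[i]<w[j']$ or $w[j']<w[j]$. A path $(v_{p_1},\dots,v_{p_j})$ corresponds to the subsequence $w[p_1]\cdots w[p_j]$. *)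

theory Defs
  imports Main
begin

(* Words are lists of naturals; positions are 0-indexed: vertex v_{i+1} of the
   paper is position i here. *)

datatype neg_label = Up | Right | Down

definition P_w :: "nat list \<Rightarrow> nat \<Rightarrow> nat \<Rightarrow> nat" where
  "P_w w i x = (GREATEST i'. i' \<le> i \<and> w ! i' = x)"

definition neg_edge_lab :: "nat list \<Rightarrow> nat \<Rightarrow> nat \<Rightarrow> neg_label \<Rightarrow> bool" where
  "neg_edge_lab w i j l \<longleftrightarrow> i < j \<and> j < length w \<and>
     (case l of
        Up \<Rightarrow> w ! i < w ! j \<and>
              (\<forall>j'. i < j' \<and> j' < j \<longrightarrow> w ! i > w ! j' \<or> w ! j' > w ! j)
      | Right \<Rightarrow> w ! i = w ! j \<and> i = P_w w (j - 1) (w ! j)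
      | Down \<Rightarrow> w ! i > w ! j \<and>
              (\<forall>j'. i < j' \<and> j' < j \<longrightarrow> w ! i < w ! j' \<or> w ! j' < w ! j))"

definition neg_edge :: "nat list \<Rightarrow> nat \<Rightarrow> nat \<Rightarrow> bool" where
  "neg_edge w i j \<longleftrightarrow> (\<exists>l. neg_edge_lab w i j l)"

definition neg_path :: "nat list \<Rightarrow> nat list \<Rightarrow> bool" where
  "neg_path w ps \<longleftrightarrow> ps \<noteq> [] \<and> (\<forall>p\<in>set ps. p < length w) \<and>
     (\<forall>k. Suc k < length ps \<longrightarrow> neg_edge w (ps ! k) (ps ! Suc k))"

definition first_occ :: "nat list \<Rightarrow> nat \<Rightarrow> bool" where
  "first_occ w i \<longleftrightarrow> i < length w \<and> (\<forall>i'<i. w ! i' \<noteq> w ! i)"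

definition path_word :: "nat list \<Rightarrow> nat list \<Rightarrow> nat list" where
  "path_word w ps = map (\<lambda>p. w ! p) ps"

end

theory Submission
  imports Defs
begin

lemma succ_lt:
  assumes "neg_edge w i j" "neg_edge w i j'" "w ! j = w ! j'" "j < j'"
  shows False
proof -
  obtain l where l: "neg_edge_lab w i j l" using assms(1) unfolding neg_edge_def by blast
  obtain l' where l': "neg_edge_lab w i j' l'" using assms(2) unfolding neg_edge_def by blast
  have ij: "i < j" "j' < length w" using l l' unfolding neg_edge_lab_def by auto
  consider "w ! i < w ! j" | "w ! i > w ! j" | "w ! i = w ! j" by linarith
  then show False
  proof cases
    case 1
    then have "l' = Up" using l' assms(3) unfolding neg_edge_lab_def
      by (cases l') auto
    then show False using l' 1 ij assms(3,4) unfolding neg_edge_lab_def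
      by (metis (no_types, lifting) neg_label.simps(7) not_less_iff_gr_or_eq)
  next
    case 2
    then have "l' = Down" using l' assms(3) unfolding neg_edge_lab_def
      by (cases l') auto
    then show False using l' 2 ij assms(3,4) unfolding neg_edge_lab_def
      by (metis (no_types, lifting) neg_label.simps(9) not_less_iff_gr_or_eq)
  next
    case 3
    then have "l' = Right" using l' assms(3) unfolding neg_edge_lab_def
      by (cases l') auto
    then have "i = P_w w (j' - 1) (w ! j')" using l' unfolding neg_edge_lab_def by auto
    moreover have "j \<le> P_w w (j' - 1) (w ! j')" unfolding P_w_def
      by (rule Greatest_le_nat[where b="j' - 1"]) (use assms(3,4) in auto)
    ultimately show False using ij by simp
  qed
qed

lemma succ_unique:
  assumes "neg_edge w i j" "neg_edge w i j'" "w ! j = w ! j'"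
  shows "j = j'"
  using succ_lt[OF assms] succ_lt[OF assms(2,1) assms(3)[symmetric]]
  by (metis linorder_neqE_nat)

theorem lemma18:
  fixes w :: "nat list" and \<sigma> :: nat and ps qs :: "nat list"
  assumes "set w = {1..\<sigma>}"
    and "neg_path w ps" and "neg_path w qs"
    and "length ps = length qs"
    and "first_occ w (hd ps)" and "first_occ w (hd qs)"
    and "ps \<noteq> qs"
  shows "path_word w ps \<noteq> path_word w qs"
proof
  assume eq: "path_word w ps = path_word w qs"
  have pne: "ps \<noteq> []" "qs \<noteq> []" using assms(2,3) unfolding neg_path_def by auto
  have lw: "\<And>k. k < length ps \<Longrightarrow> w ! (ps ! k) = w ! (qs ! k)"
    using eq assms(4) unfolding path_word_def by (metis nth_map)
  have "\<forall>k. k < length ps \<longrightarrow> ps ! k = qs ! k"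
  proof (intro allI)
    fix k show "k < length ps \<longrightarrow> ps ! k = qs ! k"
    proof (induction k)
      case 0
      show ?case
      proof
        assume k: "0 < length ps"
        have h: "w ! hd ps = w ! hd qs" using lw[OF k] pne by (simp add: hd_conv_nth)
        show "ps ! 0 = qs ! 0"
          using assms(5,6) h pne unfolding first_occ_def
          by (metis hd_conv_nth linorder_neqE_nat)
      qed
    next
      case (Suc k)
      show ?case
      proof
        assume k: "Suc k < length ps"
        then have e: "ps ! k = qs ! k" using Suc by simp
        have "neg_edge w (ps ! k) (ps ! Suc k)" using assms(2) k unfolding neg_path_def by blast
        moreover have "neg_edge w (ps ! k) (qs ! Suc k)" using assms(3,4) k e unfolding neg_path_def by auto
        ultimately show "ps ! Suc k = qs ! Suc k" using succ_unique lw[OF k] by blast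
      qed
    qed
  qed
  then have "ps = qs" using assms(4) by (metis nth_equalityI)
  then show False using assms(7) by simp
qed

end
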